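(* Let $p$ be a prime and $(K,|\cdot|)$ an ultrametric field of characteristic $p$. Let $\lambda\in K$ with $|\lambda|=1$ such that the order $q$ of $\widetilde\lambda$ in $\widetilde K^*$ is finite, and suppose $\lambda^q\ne1$. Let $S(z)\in\mathcal{O}_K[z]$ satisfy $S(0)=1$ and $\mathrm{wideg}(S(z)-1)<\infty$, and put $Q(z)=\lambda zS(z)^p$. Then the minimal period of every periodic point of $Q$ in $\mathfrak{m}_K\setminus\{0\}$ equals $q$. Furthermore, the set $F$ of all such points is non-empty and finite, and for each $a\in F$ the multiplicity $m_a$ of $a$ as a fixed point of $Q^q$ is finite and divisible by $p$, and for every integer $n\ge1$ the multiplicity of $a$ as a fixed point of $Q^{qp^n}$ equals $p^nm_a$.
   Context: $\mathcal{O}_K=\{|z|\le1\}$, $\mathfrak{m}_K=\{|z|<1\}$, $\widetilde K=\mathcal{O}_K/\mathfrak{m}_K$. For $h\in\mathcal{O}_K[[z]]$, $\mathrm{wideg}(h)$ is the order (lowest degree of a nonzero term) of its coefficientwise reduction in $\widetilde K[[\zeta]]$. Periodic points and fixed points are considered in $\mathfrak{m}_K$ (points in an algebraic closure of $K$ with norm $<1$ may be taken, extending $|\cdot|$); the multiplicity of $a$ as a fixed point of $Q^m$ is its multiplicity as a zero of $Q^m(z)-z$. *)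

theory Defs
  imports "HOL-Computational_Algebra.Polynomial" "HOL-Library.Extended_Nat"
begin

definition ultrametric_abs :: "('a::field \<Rightarrow> real) \<Rightarrow> bool" where
  "ultrametric_abs v \<longleftrightarrow>
     (\<forall>x. v x \<ge> 0) \<and> (\<forall>x. v x = 0 \<longleftrightarrow> x = 0) \<and>
     (\<forall>x y. v (x * y) = v x * v y) \<and>
     (\<forall>x y. v (x + y) \<le> max (v x) (v y))"

definition is_subfield :: "'a::field set \<Rightarrow> bool" where
  "is_subfield K \<longleftrightarrow> 0 \<in> K \<and> 1 \<in> K \<and>
     (\<forall>x\<in>K. \<forall>y\<in>K. x + y \<in> K \<and> x * y \<in> K) \<and>
     (\<forall>x\<in>K. - x \<in> K) \<and> (\<forall>x\<in>K. x \<noteq> 0 \<longrightarrow> inverse x \<in> K)"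

text \<open>\<open>q\<close> is the (finite) order of the residue class of \<open>l\<close> (with \<open>v l = 1\<close>)
  in the multiplicative group of the residue field: the least \<open>q > 0\<close>
  with \<open>l^q \<equiv> 1\<close> modulo the maximal ideal.\<close>
definition residue_order_is :: "('a::field \<Rightarrow> real) \<Rightarrow> 'a \<Rightarrow> nat \<Rightarrow> bool" where
  "residue_order_is v l q \<longleftrightarrow> q > 0 \<and> v (l ^ q - 1) < 1 \<and>
     (\<forall>k. 0 < k \<and> k < q \<longrightarrow> \<not> v (l ^ k - 1) < 1)"

text \<open>Weierstrass degree of a power series with integral coefficients: the order of
  its coefficientwise reduction (a coefficient reduces to nonzero iff it has
  absolute value 1); \<open>\<infinity>\<close> if the reduction is zero.\<close>
definition wideg :: "('a::field \<Rightarrow> real) \<Rightarrow> 'a poly \<Rightarrow> enat" where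
  "wideg v f = (if \<exists>n. v (coeff f n) = 1
                then enat (LEAST n. v (coeff f n) = 1) else \<infinity>)"

definition poly_iter :: "'a::comm_ring_1 poly \<Rightarrow> nat \<Rightarrow> 'a poly" where
  "poly_iter Q m = ((\<lambda>f. pcompose Q f) ^^ m) [:0, 1:]"

definition minimal_period :: "('a \<Rightarrow> 'a) \<Rightarrow> 'a \<Rightarrow> nat" where
  "minimal_period f a = (LEAST m. m > 0 \<and> (f ^^ m) a = a)"

end

theory Submission
  imports Defs "HOL-Computational_Algebra.Primes"
begin


lemma frob_add:
  fixes x y :: "'b::comm_ring_1"
  assumes "prime CHAR('b)"
  shows "(x + y) ^ CHAR('b) = x ^ CHAR('b) + y ^ CHAR('b)"
proof -
  let ?p = "CHAR('b)"
  have p0: "?p > 0" using assms prime_gt_0_nat by blast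
  have "(x + y) ^ ?p = (\<Sum>k\<le>?p. of_nat (?p choose k) * x ^ k * y ^ (?p - k))"
    by (rule binomial_ring)
  also have "\<dots> = (\<Sum>k\<in>{0,?p}. of_nat (?p choose k) * x ^ k * y ^ (?p - k))"
  proof (rule sum.mono_neutral_right)
    show "\<forall>i\<in>{..?p} - {0, ?p}. of_nat (?p choose i) * x ^ i * y ^ (?p - i) = 0"
    proof
      fix i assume i: "i \<in> {..?p} - {0, ?p}"
      have "?p dvd (?p choose i)" using i assms by (intro dvd_choose_prime) auto
      then have "of_nat (?p choose i) = (0::'b)" by (simp add: of_nat_eq_0_iff_char_dvd)
      then show "of_nat (?p choose i) * x ^ i * y ^ (?p - i) = 0" by simp
    qed
  qed auto
  also have "\<dots> = x ^ ?p + y ^ ?p" using p0 by (simp add: add.commute)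
  finally show ?thesis .
qed

lemma frob_diff:
  fixes x y :: "'b::comm_ring_1"
  assumes "prime CHAR('b)"
  shows "(x - y) ^ CHAR('b) = x ^ CHAR('b) - y ^ CHAR('b)"
  using frob_add[OF assms, of "x - y" y] by (simp add: algebra_simps)

locale vf =
  fixes v :: "'a::alg_closed_field \<Rightarrow> real" and p :: nat
  assumes ultra: "ultrametric_abs v" and pp: "prime p" and ch: "CHAR('a) = p"
begin

lemma v_nonneg[simp]: "v x \<ge> 0" using ultra unfolding ultrametric_abs_def by blast
lemma v_eq0[simp]: "v x = 0 \<longleftrightarrow> x = 0" using ultra unfolding ultrametric_abs_def by blast
lemma v_mult[simp]: "v (x * y) = v x * v y" using ultra unfolding ultrametric_abs_def by blast
lemma v_add: "v (x + y) \<le> max (v x) (v y)" using ultra unfolding ultrametric_abs_def by blast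
lemma v_0[simp]: "v 0 = 0" by simp
lemma v_pos[simp]: "v x > 0 \<longleftrightarrow> x \<noteq> 0" using v_nonneg[of x] v_eq0[of x] by linarith
lemma v_1[simp]: "v 1 = 1"
proof -
  have "v 1 = v 1 * v 1" using v_mult[of 1 1] by simp
  moreover have "v 1 \<noteq> 0" by simp
  ultimately show ?thesis by (metis mult_cancel_right1)
qed
lemma v_power[simp]: "v (x ^ n) = v x ^ n" by (induct n) auto
lemma v_minus[simp]: "v (- x) = v x"
proof -
  have "v (-1) * v (-1) = 1" using v_mult[of "-1" "-1"] by simp
  hence "v (-1) = 1" using v_nonneg[of "-1"]
  proof -
    have "v (-1) ^ 2 = 1" using \<open>v (-1) * v (-1) = 1\<close> by (simp add: power2_eq_square)
    then have "v (-1) = 1 \<or> v (-1) = -1" by (simp add: power2_eq_1_iff)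
    then show ?thesis using v_nonneg[of "-1"] by linarith
  qed
  thus ?thesis using v_mult[of "-1" x] by simp
qed
lemma v_commute_diff: "v (x - y) = v (y - x)" using v_minus[of "x - y"] by simp
lemma v_inverse[simp]: "v (inverse x) = inverse (v x)"
proof (cases "x = 0")
  case False
  have "v (inverse x) * v x = 1" using v_mult[of "inverse x" x] False by simp
  thus ?thesis by (metis inverse_unique mult.commute)
qed simp
lemma v_add_le: "v x \<le> r \<Longrightarrow> v y \<le> r \<Longrightarrow> v (x + y) \<le> r"
  using v_add[of x y] by linarith
lemma v_add_lt: "v x < r \<Longrightarrow> v y < r \<Longrightarrow> v (x + y) < r"
  using v_add[of x y] by linarith
lemma v_diff_le: "v x \<le> r \<Longrightarrow> v y \<le> r \<Longrightarrow> v (x - y) \<le> r"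
  using v_add_le[of x r "-y"] by simp
lemma v_diff_lt: "v x < r \<Longrightarrow> v y < r \<Longrightarrow> v (x - y) < r"
  using v_add_lt[of x r "-y"] by simp
lemma v_add_strict: assumes "v y < v x" shows "v (x + y) = v x"
proof -
  have "v (x + y) \<le> v x" using v_add[of x y] assms by linarith
  moreover have "v x \<le> max (v (x + y)) (v y)" using v_add[of "x + y" "-y"] by simp
  ultimately show ?thesis using assms by linarith
qed
lemma v_sum_le: "(\<And>i. i \<in> A \<Longrightarrow> v (f i) \<le> r) \<Longrightarrow> r \<ge> 0 \<Longrightarrow> v (sum f A) \<le> r"
  by (induct A rule: infinite_finite_induct) (auto intro!: v_add_le)
lemma v_sum_lt: "(\<And>i. i \<in> A \<Longrightarrow> v (f i) < r) \<Longrightarrow> r > 0 \<Longrightarrow> v (sum f A) < r"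
  by (induct A rule: infinite_finite_induct) (auto intro!: v_add_lt)
lemma v_of_nat_le: "v (of_nat n) \<le> 1"
  by (induct n) (auto intro!: v_add_le)

lemma p_pos: "p > 0" using pp prime_gt_0_nat by blast
lemma frob: "(x + y) ^ p = x ^ p + (y::'a) ^ p" using frob_add[of x y] ch pp by simp
lemma frob_d: "(x - y) ^ p = x ^ p - (y::'a) ^ p" using frob_diff[of x y] ch pp by simp
lemma frobP: "(x + y) ^ p = x ^ p + (y::'a poly) ^ p" using frob_add[of x y] ch pp by simp
lemma frobP_d: "(x - y) ^ p = x ^ p - (y::'a poly) ^ p" using frob_diff[of x y] ch pp by simp
lemma frob_inj: "(x::'a) ^ p = y ^ p \<Longrightarrow> x = y"
  using frob_d[of x y] by simp

lemma of_nat_pow_p: "(of_nat k :: 'a) ^ p = of_nat k"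
  by (induct k) (auto simp: frob add.commute zero_power[OF p_pos])

lemma v_of_nat_unit: assumes "\<not> p dvd k" shows "v (of_nat k :: 'a) = 1"
proof -
  let ?x = "of_nat k :: 'a"
  have nz: "?x \<noteq> 0" using assms ch by (simp add: of_nat_eq_0_iff_char_dvd)
  have "?x ^ p = ?x" by (rule of_nat_pow_p)
  then have "?x ^ (p - 1) = 1" using nz p_pos
    by (metis One_nat_def Suc_pred mult_cancel_left2 power_Suc)
  then have "v ?x ^ (p - 1) = 1" by (metis v_1 v_power)
  moreover have "p - 1 \<noteq> 0" using pp prime_ge_2_nat by (metis Suc_1 Suc_pred diff_is_0_eq not_less_eq_eq p_pos)
  ultimately show ?thesis
  proof -
    assume a: "v ?x ^ (p - 1) = 1" and b: "p - 1 \<noteq> 0"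
    have le: "v ?x \<le> 1" by (rule v_of_nat_le)
    show ?thesis
    proof (rule ccontr)
      assume "v ?x \<noteq> 1"
      hence "v ?x < 1" using le by simp
      hence "v ?x ^ (p - 1) < 1" using b by (simp add: power_less_one_iff)
      thus False using a by simp
    qed
  qed
qed

end



lemma lt1_mult: "0 \<le> a \<Longrightarrow> a \<le> 1 \<Longrightarrow> 0 \<le> b \<Longrightarrow> b < 1 \<Longrightarrow> a * b < (1::real)"
  by (meson le_less_trans mult_left_le_one_le)
lemma lt1_mult': "0 \<le> a \<Longrightarrow> a \<le> 1 \<Longrightarrow> 0 \<le> b \<Longrightarrow> b < 1 \<Longrightarrow> b * a < (1::real)"
  using lt1_mult[of a b] by (simp add: mult.commute)

context vf begin

definition ip :: "'a poly \<Rightarrow> bool" where "ip P \<longleftrightarrow> (\<forall>n. v (coeff P n) \<le> 1)"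
definition sp :: "'a poly \<Rightarrow> bool" where "sp P \<longleftrightarrow> (\<forall>n. v (coeff P n) < 1)"

lemma ipD: "ip P \<Longrightarrow> v (coeff P n) \<le> 1" by (simp add: ip_def)
lemma spD: "sp P \<Longrightarrow> v (coeff P n) < 1" by (simp add: sp_def)
lemma sp_ip: "sp P \<Longrightarrow> ip P" by (simp add: ip_def sp_def less_imp_le)

lemma ip_0[simp]: "ip 0" by (simp add: ip_def)
lemma sp_0[simp]: "sp 0" by (simp add: sp_def)
lemma ip_1[simp]: "ip 1" by (simp add: ip_def coeff_1)
lemma ip_const: "v c \<le> 1 \<Longrightarrow> ip [:c:]" by (simp add: ip_def coeff_pCons split: nat.split)
lemma sp_const: "v c < 1 \<Longrightarrow> sp [:c:]" by (simp add: sp_def coeff_pCons split: nat.split)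
lemma ip_X[simp]: "ip [:0,1:]" by (simp add: ip_def coeff_pCons split: nat.split)
lemma ip_pCons: "v a \<le> 1 \<Longrightarrow> ip P \<Longrightarrow> ip (pCons a P)"
  by (simp add: ip_def coeff_pCons split: nat.split)
lemma ip_pCons_iff[simp]: "ip (pCons a P) \<longleftrightarrow> v a \<le> 1 \<and> ip P"
  by (auto simp add: ip_def coeff_pCons split: nat.split)
lemma sp_pCons_iff: "sp (pCons a P) \<longleftrightarrow> v a < 1 \<and> sp P"
  by (auto simp add: sp_def coeff_pCons split: nat.split)
lemma ip_add: "ip P \<Longrightarrow> ip Q \<Longrightarrow> ip (P + Q)" by (simp add: ip_def v_add_le)
lemma ip_diff: "ip P \<Longrightarrow> ip Q \<Longrightarrow> ip (P - Q)" by (simp add: ip_def v_diff_le)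
lemma ip_uminus: "ip P \<Longrightarrow> ip (- P)" by (simp add: ip_def)
lemma sp_add: "sp P \<Longrightarrow> sp Q \<Longrightarrow> sp (P + Q)" by (simp add: sp_def v_add_lt)
lemma sp_diff: "sp P \<Longrightarrow> sp Q \<Longrightarrow> sp (P - Q)" by (simp add: sp_def v_diff_lt)
lemma ip_smult: "v c \<le> 1 \<Longrightarrow> ip P \<Longrightarrow> ip (smult c P)"
  by (simp add: ip_def mult_le_one)
lemma sp_smult: "v c \<le> 1 \<Longrightarrow> sp P \<Longrightarrow> sp (smult c P)"
  by (simp add: sp_def lt1_mult)

lemma ip_mult: "ip P \<Longrightarrow> ip Q \<Longrightarrow> ip (P * Q)"
  unfolding ip_def coeff_mult by (auto intro!: v_sum_le mult_le_one)

lemma sp_mult: "sp P \<Longrightarrow> ip Q \<Longrightarrow> sp (P * Q)"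
  unfolding ip_def sp_def coeff_mult
proof (intro allI v_sum_lt)
  fix n i assume "\<forall>n. v (coeff P n) < 1" "\<forall>n. v (coeff Q n) \<le> 1"
  then show "v (coeff P i * coeff Q (n - i)) < 1"
    by (simp add: lt1_mult')
qed simp

lemma sp_mult2: "ip P \<Longrightarrow> sp Q \<Longrightarrow> sp (P * Q)"
  using sp_mult[of Q P] by (simp add: mult.commute)

lemma ip_power: "ip P \<Longrightarrow> ip (P ^ n)" by (induct n) (auto intro: ip_mult)
lemma sp_power: "sp P \<Longrightarrow> n > 0 \<Longrightarrow> sp (P ^ n)"
  by (induct n) (auto intro: sp_mult sp_ip ip_power simp: power_Suc)

lemma ip_pcompose: "ip P \<Longrightarrow> ip Q \<Longrightarrow> ip (pcompose P Q)"
  by (induct P rule: pCons_induct) (auto simp: pcompose_pCons ip_pCons_iff intro!: ip_add ip_mult ip_const)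

lemma sp_pcompose: "sp P \<Longrightarrow> ip Q \<Longrightarrow> sp (pcompose P Q)"
  by (induct P rule: pCons_induct) (auto simp: pcompose_pCons sp_pCons_iff intro!: sp_add sp_mult2 sp_const)

lemma v_poly_le: assumes "ip P" "v z \<le> 1" shows "v (poly P z) \<le> 1"
  unfolding poly_altdef using assms
  by (auto intro!: v_sum_le mult_le_one simp: ipD power_le_one)

lemma v_poly_diff0: assumes "ip P" "v z < 1" shows "v (poly P z - poly P 0) < 1"
proof -
  have "poly P z - poly P 0 = (\<Sum>i\<le>degree P. coeff P i * z ^ i) - coeff P 0"
    by (simp add: poly_altdef poly_0_coeff_0)
  also have "\<dots> = (\<Sum>i\<in>{1..degree P}. coeff P i * z ^ i)"
  proof -
    have "{..degree P} = insert 0 {1..degree P}" by auto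
    then show ?thesis by simp
  qed
  also have "v \<dots> < 1"
  proof (rule v_sum_lt)
    fix i assume "i \<in> {1..degree P}"
    then have "v z ^ i < 1" using assms by (simp add: power_less_one_iff)
    moreover have "v (coeff P i) \<le> 1" using assms ipD by blast
    ultimately show "v (coeff P i * z ^ i) < 1"
      by (simp add: lt1_mult)
  qed simp
  finally show ?thesis .
qed

lemma v_poly_sp: assumes "sp P" "v z \<le> 1" shows "v (poly P z) < 1"
  unfolding poly_altdef using assms
proof (intro v_sum_lt)
  fix i assume "sp P" "v z \<le> 1"
  then show "v (coeff P i * z ^ i) < 1"
    by (simp add: lt1_mult' spD power_le_one)
qed simp

end



lemma poly_iter_0[simp]: "poly_iter Q 0 = [:0, 1:]" by (simp add: poly_iter_def)
lemma poly_iter_Suc: "poly_iter Q (Suc n) = pcompose Q (poly_iter Q n)" by (simp add: poly_iter_def)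
lemma pcompose_X_left[simp]: "pcompose [:0, 1:] (F::'a::comm_ring_1 poly) = F" by (simp add: pcompose_pCons)
lemma poly_iter_add: "poly_iter Q (m + n) = pcompose (poly_iter Q m) (poly_iter Q n)"
  by (induct m) (simp_all add: poly_iter_Suc pcompose_assoc)
lemma poly_iter_mult: "poly_iter Q (m * n) = poly_iter (poly_iter Q m) n"
  by (induct n) (simp_all add: poly_iter_Suc poly_iter_add)
lemma poly_poly_iter: "poly (poly_iter Q n) x = (poly Q ^^ n) x"
  by (induct n) (simp_all add: poly_iter_Suc poly_pcompose)
lemma poly_iter_one[simp]: "poly_iter Q 1 = Q" by (simp add: poly_iter_Suc)

context vf begin

lemma cg1_v: assumes "v (x - 1) < 1" shows "v x = 1"
proof -
  have "v (1 + (x - 1)) = v 1" by (rule v_add_strict) (use assms in simp)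
  thus ?thesis by simp
qed

lemma cg1_mult: assumes "v (x - 1) < 1" "v (y - 1) < 1" shows "v (x * y - 1) < 1"
proof -
  have "x * y - 1 = x * (y - 1) + (x - 1)" by (simp add: algebra_simps)
  moreover have "v (x * (y - 1)) < 1" using cg1_v[OF assms(1)] assms(2) by simp
  ultimately show ?thesis using assms(1) v_add_lt by metis
qed

lemma cg1_power: "v (x - 1) < 1 \<Longrightarrow> v (x ^ n - 1) < 1"
  by (induct n) (simp_all add: cg1_mult)

definition rd :: "'a poly \<Rightarrow> nat \<Rightarrow> bool" where
  "rd F d \<longleftrightarrow> ip F \<and> v (coeff F d) = 1 \<and> (\<forall>n>d. v (coeff F n) < 1)"

lemma rd_unique: assumes "rd F a" "rd F b" shows "a = b"
proof (rule ccontr)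
  assume "a \<noteq> b"
  then consider "a < b" | "b < a" by linarith
  then show False using assms unfolding rd_def by cases auto
qed

lemma rd_ip: "rd F a \<Longrightarrow> ip F" by (simp add: rd_def)

lemma rd_mult: assumes F: "rd F a" and G: "rd G b" shows "rd (F * G) (a + b)"
proof -
  have ipF: "ip F" and ipG: "ip G" using F G by (simp_all add: rd_def)
  have fa: "v (coeff F a) = 1" and gb: "v (coeff G b) = 1" using F G by (simp_all add: rd_def)
  have fi: "v (coeff F i) < 1" if "i > a" for i using F that by (simp add: rd_def)
  have gj: "v (coeff G j) < 1" if "j > b" for j using G that by (simp add: rd_def)
  have small: "v (coeff F i * coeff G j) < 1" if "i > a \<or> j > b" for i j
    using that ipD[OF ipF] ipD[OF ipG] fi gj
    by (metis lt1_mult lt1_mult' v_mult v_nonneg)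
  have c1: "v (coeff (F * G) (a + b)) = 1"
  proof -
    have "coeff (F * G) (a + b) = coeff F a * coeff G b +
            (\<Sum>i\<in>{..a + b} - {a}. coeff F i * coeff G (a + b - i))"
      unfolding coeff_mult by (subst sum.remove[of _ a]) auto
    also have "v \<dots> = v (coeff F a * coeff G b)"
    proof (rule v_add_strict)
      have "v (\<Sum>i\<in>{..a + b} - {a}. coeff F i * coeff G (a + b - i)) < 1"
      proof (rule v_sum_lt)
        fix i assume "i \<in> {..a + b} - {a}"
        then have "i > a \<or> a + b - i > b" by auto
        then show "v (coeff F i * coeff G (a + b - i)) < 1" by (rule small)
      qed simp
      thus "v (\<Sum>i\<in>{..a + b} - {a}. coeff F i * coeff G (a + b - i)) < v (coeff F a * coeff G b)"
        using fa gb by simp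
    qed
    finally show ?thesis using fa gb by simp
  qed
  have c2: "v (coeff (F * G) n) < 1" if "n > a + b" for n
    unfolding coeff_mult
  proof (rule v_sum_lt)
    fix i assume "i \<in> {..n}"
    then have "i > a \<or> n - i > b" using that by auto
    then show "v (coeff F i * coeff G (n - i)) < 1" by (rule small)
  qed simp
  show ?thesis using c1 c2 ip_mult[OF ipF ipG] by (simp add: rd_def)
qed

lemma rd_smult: "v c = 1 \<Longrightarrow> rd F a \<Longrightarrow> rd (smult c F) a"
  by (simp add: rd_def ip_def)

lemma rd_add_sp: assumes "rd F a" "sp H" shows "rd (F + H) a"
proof -
  have "v (coeff F a + coeff H a) = v (coeff F a)"
    using assms by (intro v_add_strict) (simp add: rd_def sp_def)
  moreover have "v (coeff F n + coeff H n) < 1" if "n > a" for n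
    using assms that by (intro v_add_lt) (auto simp: rd_def sp_def)
  moreover have "ip (F + H)" using ip_add[OF rd_ip[OF assms(1)] sp_ip[OF assms(2)]] .
  ultimately show ?thesis using assms by (simp add: rd_def)
qed

lemma rd_add_low: assumes "rd F a" "ip H" "\<And>n. n \<ge> a \<Longrightarrow> coeff H n = 0" shows "rd (F + H) a"
  using assms by (auto simp: rd_def intro!: ip_add)

lemma rd_X: "rd [:0, 1:] 1" by (auto simp: rd_def coeff_pCons split: nat.split)
lemma rd_1: "rd 1 0" by (auto simp: rd_def coeff_1)
lemma rd_const: "v c = 1 \<Longrightarrow> rd [:c:] 0" by (auto simp: rd_def ip_const coeff_pCons split: nat.split)

lemma rd_power: "rd F a \<Longrightarrow> rd (F ^ n) (n * a)"
  by (induct n) (auto simp: rd_1 dest: rd_mult)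

lemma rd_pcompose: "rd F a \<Longrightarrow> rd G b \<Longrightarrow> b \<ge> 1 \<Longrightarrow> rd (pcompose F G) (a * b)"
proof (induct F arbitrary: a rule: pCons_induct)
  case 0
  then show ?case by (simp add: rd_def)
next
  case (pCons f0 F')
  have ipG: "ip G" using pCons rd_ip by blast
  have ipF: "v f0 \<le> 1" "ip F'" using rd_ip[OF pCons(3)] by (simp_all add: ip_pCons_iff)
  show ?case
  proof (cases a)
    case 0
    have "v f0 = 1" using pCons(3) 0 by (simp add: rd_def)
    moreover have "sp F'"
      unfolding sp_def
    proof
      fix n show "v (coeff F' n) < 1"
        using pCons(3) 0 by (simp add: rd_def) (metis coeff_pCons_Suc zero_less_Suc)
    qed
    ultimately show ?thesis using 0 ipG
      by (simp add: pcompose_pCons) (intro rd_add_sp rd_const sp_mult2 sp_pcompose; simp)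
  next
    case (Suc a')
    have "rd F' a'"
      using pCons(3) Suc ipF unfolding rd_def
      by auto
    then have "rd (pcompose F' G) (a' * b)" using pCons by blast
    then have "rd (pcompose F' G * G) (a' * b + b)" using pCons(4) by (rule rd_mult)
    then have "rd (pcompose F' G * G + [:f0:]) (a' * b + b)"
      using pCons(5) ipF by (intro rd_add_low ip_const) (auto simp: coeff_pCons split: nat.split)
    moreover have "pcompose (pCons f0 F') G = pcompose F' G * G + [:f0:]"
      by (simp add: pcompose_pCons mult.commute add.commute)
    moreover have "a * b = a' * b + b" using Suc by simp
    ultimately show ?thesis by simp
  qed
qed

end



lemma pcompose_pow: "pcompose (P ^ n) F = (pcompose P F :: 'a::comm_ring_1 poly) ^ n"
  by (induct n) (simp_all add: pcompose_mult, metis pcompose_const one_pCons)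

lemma pCons_as: "pCons g G' = [:g:] + [:0, 1:] * (G' :: 'a::comm_ring_1 poly)" by simp

lemma absDD: "(F - X) * A + X * ((F - X) * D) = (F - X) * (A + X * (D::'b::comm_ring_1))"
  by (simp add: algebra_simps)

lemma absI2:
  fixes G Gq X h C E DF F GF :: "'b::comm_ring_1"
  assumes "G ^ p = G * Gq" "F = X * E" "GF = G + X * G ^ p * h"
  shows "GF + (C * (F * GF ^ p)) * DF
       = G + X * G ^ p * (h + C * E * (1 + X * Gq * h) ^ p * DF)"
proof -
  have "G + X * G ^ p * h = G * (1 + X * Gq * h)" using assms by (simp add: algebra_simps)
  then have "(G + X * G ^ p * h) ^ p = G ^ p * (1 + X * Gq * h) ^ p" by (simp add: power_mult_distrib)
  then show ?thesis using assms(2,3) by (simp add: algebra_simps)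
qed

lemma absI3:
  fixes G X h C V W M F WF :: "'b::comm_ring_1"
  assumes "F = C ^ k * (X * V ^ p)" "V = W ^ k + X * G ^ p * M" "WF = W + X * G ^ p * h"
  shows "C * (F * WF ^ p)
       = C ^ Suc k * (X * (W ^ Suc k + X * G ^ p * (M * W + W ^ k * h + X * G ^ p * M * h)) ^ p)"
proof -
  have "(W ^ k + X * G ^ p * M) * (W + X * G ^ p * h) =
        W ^ Suc k + X * G ^ p * (M * W + W ^ k * h + X * G ^ p * M * h)"
    by (simp add: algebra_simps)
  then have "(W ^ k + X * G ^ p * M) ^ p * (W + X * G ^ p * h) ^ p =
        (W ^ Suc k + X * G ^ p * (M * W + W ^ k * h + X * G ^ p * M * h)) ^ p"
    by (metis power_mult_distrib)
  then show ?thesis using assms by (simp add: algebra_simps)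
qed

context vf begin

definition form :: "'a poly \<Rightarrow> 'a \<Rightarrow> 'a poly \<Rightarrow> 'a \<Rightarrow> bool" where
  "form T c W nu \<longleftrightarrow> T = [:c:] * ([:0, 1:] * W ^ p) \<and> v c = 1 \<and> ip W \<and> poly W 0 = 1 \<and> c * nu ^ p = 1"

lemma formD:
  assumes "form T c W nu"
  shows "T = [:c:] * ([:0, 1:] * W ^ p)" "v c = 1" "ip W" "poly W 0 = 1" "c * nu ^ p = 1"
  using assms unfolding form_def by blast+

lemma v_eq1_of_pow: assumes "v x ^ n = 1" "n > 0" shows "v x = 1"
proof (rule ccontr)
  assume "v x \<noteq> 1"
  then consider "v x < 1" | "v x > 1" by linarith
  then show False
  proof cases
    case 1 then have "v x ^ n < 1" using assms(2) by (simp add: power_less_one_iff)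
    then show False using assms by simp
  next
    case 2 then have "1 < v x ^ n" using assms(2) by (simp add: one_less_power)
    then show False using assms by simp
  qed
qed

lemma form_nu: assumes "form T c W nu" shows "v nu = 1" "nu \<noteq> 0" "c \<noteq> 0"
proof -
  have "v c * v nu ^ p = 1" using formD(5)[OF assms] by (metis v_1 v_mult v_power)
  then show "v nu = 1" using formD(2)[OF assms] p_pos v_eq1_of_pow by simp
  then show "nu \<noteq> 0" by auto
  show "c \<noteq> 0" using formD(2)[OF assms] by auto
qed

lemma form_ipT: assumes "form T c W nu" shows "ip T"
  using formD[OF assms] by (auto intro!: ip_smult ip_power)

lemma form_TX:
  assumes "form T c W nu"
  shows "T - [:0, 1:] = [:c:] * ([:0, 1:] * (W - [:nu:]) ^ p)"
proof -
  have "(W - [:nu:]) ^ p = W ^ p - [:nu ^ p:]" by (simp add: frobP_d poly_const_pow)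
  then have "[:c:] * ([:0, 1:] * (W - [:nu:]) ^ p) = T - [:0,1:] * ([:c:] * [:nu ^ p:])"
    using formD(1)[OF assms] by (simp only: ) (simp add: algebra_simps)
  also have "[:c:] * [:nu ^ p:] = [:c * nu ^ p:]" by (simp add: mult.commute)
  also have "\<dots> = 1" using formD(5)[OF assms] one_pCons by metis
  finally show ?thesis by simp
qed

lemma iter_X:
  assumes "form T c W nu"
  shows "\<exists>E. ip E \<and> poly_iter T j = [:0, 1:] * E"
proof (induct j)
  case 0 show ?case by (intro exI[of _ 1]) simp
next
  case (Suc j)
  then obtain E where E: "ip E" "poly_iter T j = [:0, 1:] * E" by blast
  have "poly_iter T (Suc j) = pcompose ([:c:] * ([:0, 1:] * W ^ p)) ([:0, 1:] * E)"
    using E formD(1)[OF assms] by (simp add: poly_iter_Suc)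
  also have "\<dots> = [:0, 1:] * ([:c:] * E * (pcompose W ([:0, 1:] * E)) ^ p)"
    by (simp only: pcompose_mult pcompose_pow pcompose_const pcompose_X_left) (simp add: algebra_simps)
  finally show ?case using E formD[OF assms]
    by (intro exI[of _ "[:c:] * E * (pcompose W ([:0, 1:] * E)) ^ p"])
       (intro conjI ip_mult ip_power ip_const ip_pcompose ip_X; simp add: formD[OF assms])
qed

lemma iter_ip: assumes "form T c W nu" shows "ip (poly_iter T j)"
  using iter_X[OF assms, of j] by auto

lemma divdiff:
  assumes "ip G" "ip F"
  shows "\<exists>D. ip D \<and> pcompose G F - G = (F - [:0, 1:]) * D"
  using assms(1)
proof (induct G rule: pCons_induct)
  case 0 show ?case by (intro exI[of _ 0]) simp
next
  case (pCons g G')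
  then have ipG': "ip G'" and vg: "v g \<le> 1" by (simp_all add: ip_pCons_iff)
  then obtain D' where D': "ip D'" "pcompose G' F - G' = (F - [:0, 1:]) * D'" using pCons by blast
  have e1: "pcompose (pCons g G') F = [:g:] + F * pcompose G' F" by (rule pcompose_pCons)
  have e2: "pCons g G' = [:g:] + [:0, 1:] * G'" by (rule pCons_as)
  have "pcompose (pCons g G') F - pCons g G'
        = F * pcompose G' F - [:0, 1:] * G'"
    by (subst e1, subst e2) simp
  also have "\<dots> = (F - [:0, 1:]) * pcompose G' F + [:0, 1:] * (pcompose G' F - G')"
    by (simp add: algebra_simps)
  also have "\<dots> = (F - [:0, 1:]) * pcompose G' F + [:0, 1:] * ((F - [:0, 1:]) * D')"
    by (simp only: D'(2))
  also have "\<dots> = (F - [:0, 1:]) * (pcompose G' F + [:0, 1:] * D')"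
    by (rule absDD)
  finally show ?case using D' ipG' assms(2)
    by (intro exI[of _ "pcompose G' F + [:0, 1:] * D'"] conjI ip_add ip_mult ip_pcompose ip_X) simp_all
qed

lemma iterG:
  assumes "form T c W nu"
  shows "\<exists>h. ip h \<and> pcompose (W - [:nu:]) (poly_iter T j) = (W - [:nu:]) + [:0, 1:] * (W - [:nu:]) ^ p * h"
proof (induct j)
  case 0 show ?case by (intro exI[of _ 0]) simp
next
  case (Suc j)
  define G where "G = W - [:nu:]"
  define F where "F = poly_iter T j"
  have ipG: "ip G" using formD[OF assms] form_nu[OF assms] by (auto simp: G_def intro!: ip_diff ip_const)
  have ipT: "ip T" by (rule form_ipT[OF assms])
  obtain h where h: "ip h" "pcompose G F = G + [:0, 1:] * G ^ p * h" using Suc by (auto simp: G_def F_def)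
  obtain E where E: "ip E" "F = [:0, 1:] * E" using iter_X[OF assms] F_def by blast
  obtain D where D: "ip D" "pcompose G T - G = (T - [:0, 1:]) * D" using divdiff[OF ipG ipT] by blast
  have GT: "pcompose G T = G + ([:c:] * ([:0, 1:] * G ^ p)) * D"
    using D form_TX[OF assms] by (simp add: G_def algebra_simps)
  have GpGq: "G ^ p = G * G ^ (p - 1)" using p_pos by (metis Suc_diff_1 power_Suc)
  have "pcompose G (poly_iter T (Suc j)) = pcompose (pcompose G T) F"
    by (simp add: poly_iter_Suc F_def pcompose_assoc)
  also have "\<dots> = pcompose G F + ([:c:] * (F * (pcompose G F) ^ p)) * pcompose D F"
    unfolding GT by (simp only: pcompose_add pcompose_mult pcompose_pow pcompose_const pcompose_X_left)
  also have "\<dots> = G + [:0, 1:] * G ^ p * (h + [:c:] * E * (1 + [:0, 1:] * G ^ (p - 1) * h) ^ p * pcompose D F)"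
    by (rule absI2[OF GpGq E(2) h(2)])
  finally show ?case using h E D formD[OF assms] ipG iter_ip[OF assms]
    unfolding G_def[symmetric]
    by (intro exI[of _ "h + [:c:] * E * (1 + [:0, 1:] * G ^ (p - 1) * h) ^ p * pcompose D F"])
       (intro conjI ip_add ip_mult ip_power ip_const ip_pcompose ip_X ip_1; simp add: F_def)
qed

lemma iterT:
  assumes "form T c W nu"
  shows "\<exists>M. ip M \<and> poly_iter T k = [:c:] ^ k * ([:0, 1:] * (W ^ k + [:0, 1:] * (W - [:nu:]) ^ p * M) ^ p)"
proof (induct k)
  case 0 show ?case by (intro exI[of _ 0]) simp
next
  case (Suc k)
  define G where "G = W - [:nu:]"
  define F where "F = poly_iter T k"
  have ipG: "ip G" using formD[OF assms] form_nu[OF assms] by (auto simp: G_def intro!: ip_diff ip_const)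
  obtain M where M: "ip M" "F = [:c:] ^ k * ([:0, 1:] * (W ^ k + [:0, 1:] * G ^ p * M) ^ p)"
    using Suc by (auto simp: G_def F_def)
  obtain h where h: "ip h" "pcompose G F = G + [:0, 1:] * G ^ p * h"
    using iterG[OF assms, of k] by (auto simp: G_def F_def)
  have WG: "W = G + [:nu:]" by (simp add: G_def)
  have WF: "pcompose W F = W + [:0, 1:] * G ^ p * h"
    unfolding WG pcompose_add pcompose_const h(2) by (simp add: algebra_simps)
  have "poly_iter T (Suc k) = pcompose ([:c:] * ([:0, 1:] * W ^ p)) F"
    using formD(1)[OF assms] by (simp add: poly_iter_Suc F_def)
  also have "\<dots> = [:c:] * (F * (pcompose W F) ^ p)"
    by (simp only: pcompose_mult pcompose_pow pcompose_const pcompose_X_left)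
  also have "\<dots> = [:c:] ^ Suc k * ([:0, 1:] * (W ^ Suc k + [:0, 1:] * G ^ p * (M * W + W ^ k * h + [:0, 1:] * G ^ p * M * h)) ^ p)"
    by (rule absI3[OF M(2) refl WF])
  finally show ?case using M h formD[OF assms] ipG
    unfolding G_def[symmetric]
    by (intro exI[of _ "M * W + W ^ k * h + [:0, 1:] * G ^ p * M * h"])
       (intro conjI ip_add ip_mult ip_power ip_const ip_X; simp)
qed

end



lemma order_power_gen: "(P::'a::idom poly) \<noteq> 0 \<Longrightarrow> order a (P ^ n) = n * order a P"
  by (induct n) (simp_all add: order_mult)

context vf begin

lemma iterT_poly:
  assumes "form T c W nu"
  obtains M where "ip M"
    "\<And>x. (poly T ^^ k) x = c ^ k * x * (poly W x ^ k + x * poly (W - [:nu:]) x ^ p * poly M x) ^ p"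
proof -
  obtain M where M: "ip M" "poly_iter T k = [:c:] ^ k * ([:0, 1:] * (W ^ k + [:0, 1:] * (W - [:nu:]) ^ p * M) ^ p)"
    using iterT[OF assms] by blast
  have "(poly T ^^ k) x = c ^ k * x * (poly W x ^ k + x * poly (W - [:nu:]) x ^ p * poly M x) ^ p" for x
    using arg_cong[OF M(2), of "\<lambda>P. poly P x"] by (simp add: poly_poly_iter poly_const_pow algebra_simps)
  then show ?thesis using M(1) that by blast
qed

lemma form_pow:
  assumes "form T c W nu"
  obtains M where "ip M" "form (poly_iter T p) (c ^ p) (W ^ p + [:0, 1:] * (W - [:nu:]) ^ p * M) (nu ^ p)"
    "W ^ p + [:0, 1:] * (W - [:nu:]) ^ p * M - [:nu ^ p:] = (W - [:nu:]) ^ p * (1 + [:0, 1:] * M)"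
proof -
  obtain M where M: "ip M" "poly_iter T p = [:c:] ^ p * ([:0, 1:] * (W ^ p + [:0, 1:] * (W - [:nu:]) ^ p * M) ^ p)"
    using iterT[OF assms] by blast
  define W' where "W' = W ^ p + [:0, 1:] * (W - [:nu:]) ^ p * M"
  have ipG: "ip (W - [:nu:])" using formD[OF assms] form_nu[OF assms] by (auto intro!: ip_diff ip_const)
  have "form (poly_iter T p) (c ^ p) W' (nu ^ p)"
    unfolding form_def
  proof (intro conjI)
    show "poly_iter T p = [:c ^ p:] * ([:0, 1:] * W' ^ p)" using M(2) by (simp add: W'_def poly_const_pow)
    show "v (c ^ p) = 1" using formD(2)[OF assms] by simp
    show "ip W'" unfolding W'_def using formD(3)[OF assms] M(1) ipG
      by (intro ip_add ip_mult ip_power ip_X)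
    show "poly W' 0 = 1" using formD(4)[OF assms] by (simp add: W'_def)
    show "c ^ p * (nu ^ p) ^ p = 1" using formD(5)[OF assms] by (metis power_mult_distrib power_one)
  qed
  moreover have "W' - [:nu ^ p:] = (W - [:nu:]) ^ p * (1 + [:0, 1:] * M)"
  proof -
    have "(W - [:nu:]) ^ p = W ^ p - [:nu ^ p:]" by (simp add: frobP_d poly_const_pow)
    then show ?thesis unfolding W'_def by (simp add: algebra_simps)
  qed
  ultimately show ?thesis using that M(1) unfolding W'_def by blast
qed

lemma form_order:
  assumes "form T c W nu" "W - [:nu:] \<noteq> 0" "a \<noteq> 0"
  shows "T - [:0, 1:] \<noteq> 0" "order a (T - [:0, 1:]) = p * order a (W - [:nu:])"
proof -
  have c0: "c \<noteq> 0" using form_nu[OF assms(1)] by simp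
  have eq: "T - [:0, 1:] = [:c:] * ([:0, 1:] * (W - [:nu:]) ^ p)" by (rule form_TX[OF assms(1)])
  have nz: "[:c:] * ([:0, 1:] * (W - [:nu:]) ^ p) \<noteq> 0" using c0 assms(2) by simp
  then show "T - [:0, 1:] \<noteq> 0" using eq by simp
  have nz2: "[:0, 1:] * (W - [:nu:]) ^ p \<noteq> 0" using nz by auto
  have "order a ([:c:] * ([:0, 1:] * (W - [:nu:]) ^ p)) =
        order a [:c:] + order a ([:0, 1:] * (W - [:nu:]) ^ p)" by (rule order_mult[OF nz])
  also have "order a ([:0, 1:] * (W - [:nu:]) ^ p) = order a [:0, 1:] + order a ((W - [:nu:]) ^ p)"
    by (rule order_mult[OF nz2])
  also have "order a [:c:] = 0" using c0 by (intro order_0I) simp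
  also have "order a [:0, 1:] = 0" using assms(3) by (intro order_0I) simp
  also have "order a ((W - [:nu:]) ^ p) = p * order a (W - [:nu:])"
    using assms(2) by (rule order_power_gen)
  finally show "order a (T - [:0, 1:]) = p * order a (W - [:nu:])" using eq by simp
qed

lemma v_lt1_of_pow: "v x ^ n < 1 \<Longrightarrow> n > 0 \<Longrightarrow> v x < 1"
  by (metis not_less one_le_power)

lemma nu_cg: assumes "form T c W nu" "v (c - 1) < 1" shows "v (nu - 1) < 1"
proof -
  have "(nu - 1) ^ p = nu ^ p - 1" by (simp add: frob_d)
  also have "\<dots> = nu ^ p * (1 - c)" using formD(5)[OF assms(1)] by (simp add: algebra_simps)
  finally have "v ((nu - 1) ^ p) = v (nu ^ p * (1 - c))" by simp
  then have "v (nu - 1) ^ p = v (nu) ^ p * v (c - 1)" using v_commute_diff[of 1 c] by simp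
  then have "v (nu - 1) ^ p < 1" using form_nu[OF assms(1)] assms(2) by simp
  then show ?thesis using v_lt1_of_pow p_pos by blast
qed

lemma one_plus_small: "v x < 1 \<Longrightarrow> 1 + x \<noteq> 0"
  by (metis add_eq_0_iff v_1 v_minus less_irrefl)

lemma periodic_aux:
  "0 < k \<Longrightarrow> form T c W nu \<Longrightarrow> v (c - 1) < 1 \<Longrightarrow> v a < 1 \<Longrightarrow> a \<noteq> 0 \<Longrightarrow>
    (poly T ^^ k) a = a \<Longrightarrow> poly (W - [:nu:]) a = 0"
proof (induct k arbitrary: T c W nu rule: less_induct)
  case (less k)
  note fm = less(3)
  obtain M where M: "ip M"
    "\<And>x. (poly T ^^ k) x = c ^ k * x * (poly W x ^ k + x * poly (W - [:nu:]) x ^ p * poly M x) ^ p"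
    using iterT_poly[OF fm] by blast
  define y where "y = poly (W - [:nu:]) a"
  define w where "w = poly W a"
  define m where "m = poly M a"
  have c0: "c \<noteq> 0" and nu1: "v nu = 1" using form_nu[OF fm] by auto
  have "a = c ^ k * a * (w ^ k + a * y ^ p * m) ^ p"
    using M(2)[of a] less(7) by (simp add: y_def w_def m_def)
  then have "c ^ k * (w ^ k + a * y ^ p * m) ^ p = 1" using less(6)
    by (metis mult.commute mult_cancel_left1 mult.assoc)
  moreover have "c ^ k * (nu ^ k) ^ p = 1"
    using formD(5)[OF fm] by (metis power_mult_distrib power_mult power_one mult.commute)
  ultimately have "(w ^ k + a * y ^ p * m) ^ p = (nu ^ k) ^ p" using c0 by (metis mult_left_cancel power_not_zero)
  then have keq: "w ^ k + a * y ^ p * m = nu ^ k" by (rule frob_inj)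
  have vm: "v m \<le> 1" unfolding m_def using M(1) by (intro v_poly_le) (use less in auto)
  have vsmall: "v (a * m) < 1" using less(5) vm by (simp add: lt1_mult')
  show ?case
  proof (cases "p dvd k")
    case True
    then obtain k' where k': "k = p * k'" by blast
    have p2: "p \<ge> 2" using pp prime_ge_2_nat by blast
    have k'pos: "k' > 0" using less(2) k' by (cases k') auto
    have "k' < k" using k' p2 k'pos by (simp add: less_le_trans)
    obtain M' where M': "ip M'" "form (poly_iter T p) (c ^ p) (W ^ p + [:0, 1:] * (W - [:nu:]) ^ p * M') (nu ^ p)"
      "W ^ p + [:0, 1:] * (W - [:nu:]) ^ p * M' - [:nu ^ p:] = (W - [:nu:]) ^ p * (1 + [:0, 1:] * M')"
      using form_pow[OF fm] by blast
    have "v (c ^ p - 1) < 1"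
    proof -
      have "c ^ p - 1 = (c - 1) ^ p" by (simp add: frob_d)
      then show ?thesis using less(4) p_pos by (simp add: power_less_one_iff)
    qed
    moreover have "(poly (poly_iter T p) ^^ k') a = a"
    proof -
      have "poly (poly_iter T p) = poly T ^^ p" by (rule ext) (simp add: poly_poly_iter)
      then show ?thesis using less(7) k' by (simp add: funpow_mult)
    qed
    ultimately have "poly (W ^ p + [:0, 1:] * (W - [:nu:]) ^ p * M' - [:nu ^ p:]) a = 0"
      using less(1)[OF \<open>k' < k\<close> k'pos M'(2)] less(5,6) by blast
    then have "y ^ p * (1 + a * poly M' a) = 0" unfolding M'(3) by (simp add: y_def)
    moreover have "v (poly M' a) \<le> 1" using M'(1) less(5) by (intro v_poly_le) auto
    then have "1 + a * poly M' a \<noteq> 0" using less(5) by (intro one_plus_small) (simp add: lt1_mult')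
    ultimately show ?thesis by (simp add: y_def)
  next
    case False
    show ?thesis
    proof (rule ccontr)
      assume y0: "poly (W - [:nu:]) a \<noteq> 0"
      then have yne: "y \<noteq> 0" by (simp add: y_def)
      have w1: "v (w - 1) < 1"
        using v_poly_diff0[OF formD(3)[OF fm] less(5)] formD(4)[OF fm] by (simp add: w_def)
      have nu1': "v (nu - 1) < 1" by (rule nu_cg[OF fm less(4)])
      have wy: "w = nu + y" by (simp add: w_def y_def)
      have vy: "v y < 1"
      proof -
        have "y = (w - 1) - (nu - 1)" using wy by simp
        then show ?thesis using w1 nu1' v_diff_lt by metis
      qed
      define S where "S = (\<Sum>i<k. nu ^ (k - Suc i) * w ^ i)"
      have "w ^ k - nu ^ k = (w - nu) * S" unfolding S_def by (rule power_diff_sumr2)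
      then have wk: "w ^ k - nu ^ k = y * S" using wy by simp
      have "S - of_nat k = (\<Sum>i<k. nu ^ (k - Suc i) * w ^ i - 1)"
        unfolding S_def by (simp add: sum_subtractf)
      also have "v \<dots> < 1"
        by (intro v_sum_lt cg1_mult cg1_power nu1' w1) simp
      finally have Sk: "v (S - of_nat k) < 1" .
      have vk: "v (of_nat k :: 'a) = 1" using False by (rule v_of_nat_unit)
      have "v (of_nat k + (S - of_nat k)) = v (of_nat k :: 'a)"
        by (rule v_add_strict) (use Sk vk in simp)
      then have vS: "v S = 1" using vk by simp
      have "w ^ k = nu ^ k - a * y ^ p * m" using keq by (simp add: eq_diff_eq)
      then have "y * S = - (a * y ^ p * m)" using wk by simp
      then have "v y = v a * v y ^ p * v m" using vS by (metis v_minus v_mult v_power mult_1_right)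
      also have "\<dots> \<le> v a * v y ^ p" using vm by (simp add: mult_left_le)
      also have "\<dots> < v y ^ p"
        using less(5) yne by simp
      also have "\<dots> \<le> v y ^ 1" using vy p_pos by (intro power_decreasing) auto
      finally show False by simp
    qed
  qed
qed

end



context vf begin

lemma no_small_root_coeff:
  assumes "f \<noteq> 0" "\<And>x. poly f x = 0 \<Longrightarrow> v x \<ge> 1"
  shows "v (coeff f n) \<le> v (coeff f 0)"
  using assms
proof (induct "degree f" arbitrary: f n rule: less_induct)
  case less
  show ?case
  proof (cases "degree f = 0")
    case True
    then show ?thesis by (cases n) (auto simp: coeff_eq_0)
  next
    case False
    then obtain r where r: "poly f r = 0" using alg_closed_imp_poly_has_root by blast
    then have vr: "v r \<ge> 1" using less by blast
    from r obtain g where g: "f = [:-r, 1:] * g" using poly_eq_0_iff_dvd by (metis dvdE)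
    have g0: "g \<noteq> 0" using less(2) g by auto
    have "degree ([:-r, 1:] * g) = degree [:-r, 1:] + degree g" by (rule degree_mult_eq) (use g0 in simp_all)
    then have dg: "degree f = Suc (degree g)" using g by simp
    have roots: "poly g x = 0 \<Longrightarrow> v x \<ge> 1" for x using less(3)[of x] g by simp
    have IH: "v (coeff g m) \<le> v (coeff g 0)" for m
      using less(1)[of g m] dg g0 roots by simp
    have cf0: "coeff f 0 = - r * coeff g 0" using g by simp
    have cfS: "coeff f (Suc m) = - r * coeff g (Suc m) + coeff g m" for m using g by simp
    have vf0: "v (coeff f 0) = v r * v (coeff g 0)" using cf0 by simp
    have vg0: "v (coeff g 0) \<le> v r * v (coeff g 0)" using vr
      by (metis mult_le_cancel_right1 v_nonneg mult.commute mult_right_mono mult_1)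
    show ?thesis
    proof (cases n)
      case 0 then show ?thesis by simp
    next
      case (Suc m)
      have "v (coeff f (Suc m)) \<le> max (v (- r * coeff g (Suc m))) (v (coeff g m))"
        using cfS v_add by metis
      moreover have "v (- r * coeff g (Suc m)) \<le> v r * v (coeff g 0)"
        using IH[of "Suc m"] vr by (simp add: mult_left_mono)
      moreover have "v (coeff g m) \<le> v r * v (coeff g 0)" using IH[of m] vg0 by linarith
      ultimately show ?thesis using Suc vf0 by simp
    qed
  qed
qed

lemma small_root_exists:
  assumes "v (coeff f 0) < 1" "v (coeff f n) = 1" "f \<noteq> 0"
  shows "\<exists>x. poly f x = 0 \<and> v x < 1"
proof (rule ccontr)
  assume "\<not> ?thesis"
  then have "\<And>x. poly f x = 0 \<Longrightarrow> v x \<ge> 1" by (meson not_le)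
  then have "v (coeff f n) \<le> v (coeff f 0)" using no_small_root_coeff assms(3) by blast
  then show False using assms by simp
qed

lemma residue_cg:
  assumes fm: "form T c W nu" and a: "v a < 1" "a \<noteq> 0" and per: "(poly T ^^ m) a = a"
  shows "v (c ^ m - 1) < 1"
proof -
  obtain M where M: "ip M"
    "\<And>x. (poly T ^^ m) x = c ^ m * x * (poly W x ^ m + x * poly (W - [:nu:]) x ^ p * poly M x) ^ p"
    using iterT_poly[OF fm] by blast
  define V where "V = poly W a ^ m + a * poly (W - [:nu:]) a ^ p * poly M a"
  have ipG: "ip (W - [:nu:])" using formD[OF fm] form_nu[OF fm] by (auto intro!: ip_diff ip_const)
  have "a = c ^ m * a * V ^ p" using M(2)[of a] per by (simp add: V_def)
  then have cV: "c ^ m * V ^ p = 1" using a(2) by (metis mult.commute mult_cancel_left1 mult.assoc)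
  have w1: "v (poly W a - 1) < 1"
    using v_poly_diff0[OF formD(3)[OF fm] a(1)] formD(4)[OF fm] by simp
  have vy: "v (poly (W - [:nu:]) a) \<le> 1" by (rule v_poly_le[OF ipG]) (use a in simp)
  have vM: "v (poly M a) \<le> 1" by (rule v_poly_le[OF M(1)]) (use a in simp)
  have small: "v (a * poly (W - [:nu:]) a ^ p * poly M a) < 1"
  proof -
    have "v (poly (W - [:nu:]) a ^ p * poly M a) \<le> 1" using vy vM by (simp add: mult_le_one power_le_one)
    then show ?thesis using a(1) by (simp add: mult.assoc lt1_mult')
  qed
  have V1: "v (V - 1) < 1"
  proof -
    have "V - 1 = (poly W a ^ m - 1) + a * poly (W - [:nu:]) a ^ p * poly M a" by (simp add: V_def)
    then show ?thesis using cg1_power[OF w1, of m] small v_add_lt by metis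
  qed
  have "c ^ m - 1 = c ^ m * (1 - V ^ p)" using cV by (simp add: algebra_simps)
  then have "v (c ^ m - 1) = v (V ^ p - 1)" using formD(2)[OF fm] v_commute_diff[of 1 "V ^ p"] by simp
  then show ?thesis using cg1_power[OF V1, of p] by simp
qed

lemma mult_lemma:
  "form T c W nu \<Longrightarrow> W - [:nu:] \<noteq> 0 \<Longrightarrow> poly (W - [:nu:]) a = 0 \<Longrightarrow> a \<noteq> 0 \<Longrightarrow> v a < 1 \<Longrightarrow>
   order a (poly_iter T (p ^ n) - [:0, 1:]) = p ^ n * order a (T - [:0, 1:])"
proof (induct n arbitrary: T c W nu)
  case 0 then show ?case by (simp add: poly_iter_Suc)
next
  case (Suc n)
  obtain M' where M': "ip M'" "form (poly_iter T p) (c ^ p) (W ^ p + [:0, 1:] * (W - [:nu:]) ^ p * M') (nu ^ p)"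
    "W ^ p + [:0, 1:] * (W - [:nu:]) ^ p * M' - [:nu ^ p:] = (W - [:nu:]) ^ p * (1 + [:0, 1:] * M')"
    using form_pow[OF Suc(2)] by blast
  define G where "G = W - [:nu:]"
  define E where "E = 1 + [:0, 1:] * M'"
  have E0: "E \<noteq> 0" proof assume "E = 0" then have "poly E 0 = 0" by simp then show False by (simp add: E_def) qed
  have Ea: "poly E a \<noteq> 0"
  proof -
    have "v (poly M' a) \<le> 1" using M'(1) Suc(6) by (intro v_poly_le) auto
    then have "1 + a * poly M' a \<noteq> 0" using Suc(6) by (intro one_plus_small) (simp add: lt1_mult')
    then show ?thesis by (simp add: E_def)
  qed
  have G'nz: "G ^ p * E \<noteq> 0" using Suc(3) E0 by (simp add: G_def)
  have G'a: "poly (G ^ p * E) a = 0" using Suc(4) p_pos by (simp add: G_def)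
  define W' where "W' = W ^ p + [:0, 1:] * (W - [:nu:]) ^ p * M'"
  have fm': "form (poly_iter T p) (c ^ p) W' (nu ^ p)" using M'(2) by (simp only: W'_def)
  have W'eq: "W' - [:nu ^ p:] = G ^ p * E" using M'(3) by (simp only: W'_def G_def E_def)
  have p1: "W' - [:nu ^ p:] \<noteq> 0" using G'nz W'eq by metis
  have p2: "poly (W' - [:nu ^ p:]) a = 0" using G'a W'eq by metis
  have IH: "order a (poly_iter (poly_iter T p) (p ^ n) - [:0, 1:]) = p ^ n * order a (poly_iter T p - [:0, 1:])"
    by (rule Suc(1)[OF fm' p1 p2 Suc(5,6)])
  have o1: "order a (poly_iter T p - [:0, 1:]) = p * order a (G ^ p * E)"
    using form_order(2)[OF fm' p1 Suc(5)] W'eq by metis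
  have o2: "order a (G ^ p * E) = p * order a G"
  proof -
    have "order a (G ^ p * E) = order a (G ^ p) + order a E" by (rule order_mult[OF G'nz])
    also have "order a E = 0" using Ea by (rule order_0I)
    also have "order a (G ^ p) = p * order a G" using Suc(3) by (simp add: G_def order_power_gen)
    finally show ?thesis by simp
  qed
  have o3: "order a (T - [:0, 1:]) = p * order a G"
    using form_order(2)[OF Suc(2,3,5)] by (simp add: G_def)
  have "poly_iter T (p ^ Suc n) = poly_iter (poly_iter T p) (p ^ n)" by (simp add: poly_iter_mult)
  then show ?case using IH o1 o2 o3 by simp
qed

lemma rd_iter: assumes "rd Q a" "a \<ge> 1" shows "rd (poly_iter Q k) (a ^ k)"
proof (induct k)
  case 0 then show ?case using rd_X by simp
next
  case (Suc k)
  have "a ^ k \<ge> 1" using assms(2) by simp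
  then show ?case using rd_pcompose[OF assms(1) Suc] by (simp add: poly_iter_Suc)
qed

end



theorem propositionA1:
  fixes v :: "'a::alg_closed_field \<Rightarrow> real"
    and K :: "'a set" and p q :: nat and lam :: 'a and S :: "'a poly"
  assumes "prime p" and "CHAR('a) = p"
    and "ultrametric_abs v" and "is_subfield K"
    and "lam \<in> K" and "v lam = 1"
    and "residue_order_is v lam q" and "lam ^ q \<noteq> 1"
    and "\<forall>n. coeff S n \<in> K \<and> v (coeff S n) \<le> 1"
    and "poly S 0 = 1" and "wideg v (S - 1) < \<infinity>"
  shows "let Q = [:0, lam:] * S ^ p;
             F = {a. v a < 1 \<and> a \<noteq> 0 \<and> (\<exists>m>0. (poly Q ^^ m) a = a)}
         in (\<forall>a\<in>F. minimal_period (poly Q) a = q)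
          \<and> F \<noteq> {} \<and> finite F
          \<and> (\<forall>a\<in>F. poly_iter Q q - [:0, 1:] \<noteq> 0
                 \<and> p dvd order a (poly_iter Q q - [:0, 1:])
                 \<and> (\<forall>n\<ge>1. order a (poly_iter Q (q * p ^ n) - [:0, 1:])
                            = p ^ n * order a (poly_iter Q q - [:0, 1:])))"
proof -
  interpret vf v p using assms(1-3) by unfold_locales auto
  define Q where "Q = [:0, lam:] * S ^ p"
  define F where "F = {a. v a < 1 \<and> a \<noteq> 0 \<and> (\<exists>m>0. (poly Q ^^ m) a = a)}"
  have q0: "q > 0" and lamq: "v (lam ^ q - 1) < 1"
    and resmin: "\<And>k. 0 < k \<Longrightarrow> k < q \<Longrightarrow> \<not> v (lam ^ k - 1) < 1"
    using assms(7) unfolding residue_order_is_def by auto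
  have lam0: "lam \<noteq> 0" using assms(6) by auto
  obtain nu0 where nu0: "nu0 ^ p = inverse lam" using nth_root_exists p_pos by blast
  have ipS: "ip S" using assms(9) by (simp add: ip_def)
  have Qeq: "Q = [:lam:] * ([:0, 1:] * S ^ p)" by (simp add: Q_def)
  have fQ: "form Q lam S nu0"
    unfolding form_def using Qeq assms(6,10) ipS nu0 lam0 by simp
  define G0 where "G0 = S - [:nu0:]"
  obtain M where M: "ip M" "poly_iter Q q = [:lam:] ^ q * ([:0, 1:] * (S ^ q + [:0, 1:] * G0 ^ p * M) ^ p)"
    using iterT[OF fQ, of q] unfolding G0_def by blast
  define R where "R = poly_iter Q q"
  define Sq where "Sq = S ^ q + [:0, 1:] * G0 ^ p * M"
  define GR where "GR = Sq - [:nu0 ^ q:]"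
  have ipG0: "ip G0" using ipS form_nu[OF fQ] by (auto simp: G0_def intro!: ip_diff ip_const)
  have fR: "form R (lam ^ q) Sq (nu0 ^ q)"
    unfolding form_def
  proof (intro conjI)
    show "R = [:lam ^ q:] * ([:0, 1:] * Sq ^ p)" using M(2) by (simp add: R_def Sq_def poly_const_pow)
    show "v (lam ^ q) = 1" using assms(6) by simp
    show "ip Sq" unfolding Sq_def using ipS M(1) ipG0 by (intro ip_add ip_mult ip_power ip_X)
    show "poly Sq 0 = 1" using assms(10) by (simp add: Sq_def)
    show "lam ^ q * (nu0 ^ q) ^ p = 1" using formD(5)[OF fQ]
      by (metis power_mult_distrib power_mult power_one mult.commute)
  qed
  have GR0: "poly GR 0 \<noteq> 0"
  proof
    assume "poly GR 0 = 0"
    then have "nu0 ^ q = 1" using assms(10) by (simp add: GR_def Sq_def)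
    then show False using formD(5)[OF fR] assms(8) by simp
  qed
  have GRnz: "GR \<noteq> 0" using GR0 by auto
  have RX: "R - [:0, 1:] \<noteq> 0" using form_order(1)[OF fR _ one_neq_zero] GRnz by (simp add: GR_def)
  have polyR: "poly R = poly Q ^^ q" by (rule ext) (simp add: R_def poly_poly_iter)
  have fixR: "poly R a = a" if "poly GR a = 0" for a
  proof -
    have "poly (R - [:0, 1:]) a = 0" using form_TX[OF fR] that p_pos by (simp add: GR_def)
    then show ?thesis by simp
  qed
  have dvdq: "q dvd m" if a: "v a < 1" "a \<noteq> 0" and per: "(poly Q ^^ m) a = a" for a m
  proof -
    have cm: "v (lam ^ m - 1) < 1" by (rule residue_cg[OF fQ a per])
    define r where "r = m mod q"
    define s where "s = m div q"
    have mqr: "m = q * s + r" by (simp add: r_def s_def)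
    have A: "v ((lam ^ q) ^ s - 1) < 1" by (rule cg1_power[OF lamq])
    have "lam ^ r - 1 = lam ^ r * (1 - (lam ^ q) ^ s) + (lam ^ m - 1)"
      by (simp add: mqr power_add power_mult algebra_simps)
    moreover have "v (lam ^ r * (1 - (lam ^ q) ^ s)) < 1"
      using A assms(6) v_commute_diff[of 1 "(lam ^ q) ^ s"] by simp
    ultimately have "v (lam ^ r - 1) < 1" using cm v_add_lt by metis
    moreover have "r < q" using q0 by (simp add: r_def)
    ultimately have "r = 0" using resmin by (meson neq0_conv)
    then show ?thesis by (simp add: r_def dvd_eq_mod_eq_0)
  qed
  have Ffix: "(poly Q ^^ q) a = a \<and> poly GR a = 0" if "a \<in> F" for a
  proof -
    from that obtain m where a: "v a < 1" "a \<noteq> 0" and m: "m > 0" "(poly Q ^^ m) a = a"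
      by (auto simp: F_def)
    obtain s where s: "m = q * s" using dvdq[OF a m(2)] by blast
    have s0: "s > 0" using m(1) s by (cases s) auto
    have "(poly R ^^ s) a = a" using m(2) s polyR by (simp add: funpow_mult)
    then have "poly GR a = 0"
      using periodic_aux[OF s0 fR _ a] lamq by (simp add: GR_def)
    then show ?thesis using fixR polyR by metis
  qed
  have P1: "\<forall>a\<in>F. minimal_period (poly Q) a = q"
  proof
    fix a assume aF: "a \<in> F"
    then have a: "v a < 1" "a \<noteq> 0" by (auto simp: F_def)
    show "minimal_period (poly Q) a = q"
      unfolding minimal_period_def
    proof (rule Least_equality)
      show "0 < q \<and> (poly Q ^^ q) a = a" using q0 Ffix[OF aF] by simp
      show "\<And>y. 0 < y \<and> (poly Q ^^ y) a = a \<Longrightarrow> q \<le> y"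
        using dvdq[OF a] by (meson dvd_imp_le)
    qed
  qed
  have P3: "finite F"
  proof (rule finite_subset)
    show "F \<subseteq> {x. poly (R - [:0, 1:]) x = 0}" using Ffix polyR by auto
    show "finite {x. poly (R - [:0, 1:]) x = 0}" using RX by (rule poly_roots_finite)
  qed
  have "\<exists>n. v (coeff GR n) = 1"
  proof (rule ccontr)
    assume nex: "\<not> (\<exists>n. v (coeff GR n) = 1)"
    have ipGR: "ip GR" unfolding GR_def using formD(3)[OF fR] form_nu[OF fR] by (intro ip_diff ip_const) auto
    have spGR: "sp GR" unfolding sp_def
    proof
      fix n show "v (coeff GR n) < 1" using ipD[OF ipGR, of n] nex by (metis less_eq_real_def)
    qed
    have "sp (R - [:0, 1:])"
      unfolding form_TX[OF fR] GR_def[symmetric]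
      using spGR p_pos assms(6) by (intro sp_mult2 ip_const ip_X sp_power) auto
    then have rdR1: "rd R 1" using rd_add_sp[OF rd_X, of "R - [:0, 1:]"] by simp
    obtain n0 where n0: "v (coeff (S - 1) n0) = 1"
      using assms(11) unfolding wideg_def by (auto split: if_splits)
    have n0pos: "n0 > 0" using n0 assms(10) by (cases n0) (auto simp: poly_0_coeff_0)
    have cn0: "v (coeff S n0) = 1" using n0 n0pos by (simp add: coeff_1)
    define N where "N = {n. v (coeff S n) = 1}"
    have finN: "finite N"
    proof (rule finite_subset)
      show "N \<subseteq> {..degree S}" unfolding N_def
        by (auto simp: coeff_eq_0 not_le) (metis coeff_eq_0 v_0 zero_neq_one not_le)
    qed simp
    define s0 where "s0 = Max N"
    have s0N: "s0 \<in> N" using finN cn0 unfolding s0_def N_def by (intro Max_in) auto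
    have n0s0: "n0 \<le> s0" using finN cn0 unfolding s0_def N_def by (intro Max_ge) auto
    have rdS: "rd S s0" unfolding rd_def
    proof (intro conjI allI impI)
      show "ip S" by (rule ipS)
      show "v (coeff S s0) = 1" using s0N by (simp add: N_def)
      fix n assume "s0 < n"
      then have "n \<notin> N" using finN unfolding s0_def by (meson Max_ge not_le)
      then show "v (coeff S n) < 1" using ipD[OF ipS, of n] by (simp add: N_def)
    qed
    have rdQ: "rd Q (0 + (1 + p * s0))"
      unfolding Qeq using assms(6)
      by (intro rd_mult rd_const rd_X) (auto simp: rd_power[OF rdS] mult.commute)
    have "rd R ((1 + p * s0) ^ q)" unfolding R_def using rdQ by (intro rd_iter) auto
    then have "(1 + p * s0) ^ q = 1" using rdR1 rd_unique by blast
    moreover have "1 + p * s0 \<ge> 2"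
    proof -
      have "s0 > 0" using n0pos n0s0 by linarith
      then have "p * s0 > 0" using p_pos by simp
      then show ?thesis by linarith
    qed
    ultimately show False using q0 self_le_power[of "1 + p * s0" q] by linarith
  qed
  then obtain n1 where n1: "v (coeff GR n1) = 1" by blast
  have GRc0: "v (coeff GR 0) < 1"
  proof -
    have "v (nu0 ^ q - 1) < 1" by (rule nu_cg[OF fR lamq])
    then show ?thesis using assms(10) v_commute_diff[of 1 "nu0 ^ q"]
      by (simp add: GR_def Sq_def poly_0_coeff_0[symmetric])
  qed
  obtain a0 where a0: "poly GR a0 = 0" "v a0 < 1" using small_root_exists[OF GRc0 n1 GRnz] by blast
  have a0nz: "a0 \<noteq> 0" using a0 GR0 by auto
  have "a0 \<in> F" unfolding F_def using a0 a0nz fixR[OF a0(1)] polyR q0 by auto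
  then have P2: "F \<noteq> {}" by auto
  have P4: "\<forall>a\<in>F. poly_iter Q q - [:0, 1:] \<noteq> 0
                 \<and> p dvd order a (poly_iter Q q - [:0, 1:])
                 \<and> (\<forall>n\<ge>1. order a (poly_iter Q (q * p ^ n) - [:0, 1:])
                            = p ^ n * order a (poly_iter Q q - [:0, 1:]))"
  proof
    fix a assume aF: "a \<in> F"
    then have a: "v a < 1" "a \<noteq> 0" by (auto simp: F_def)
    have GRa: "poly GR a = 0" using Ffix[OF aF] by blast
    have ord: "order a (R - [:0, 1:]) = p * order a GR"
      using form_order(2)[OF fR _ a(2)] GRnz by (simp add: GR_def)
    have "order a (poly_iter Q (q * p ^ n) - [:0, 1:]) = p ^ n * order a (R - [:0, 1:])" for n
      using mult_lemma[OF fR _ _ a(2,1)] GRnz GRa by (simp add: GR_def R_def poly_iter_mult)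
    then show "poly_iter Q q - [:0, 1:] \<noteq> 0
                 \<and> p dvd order a (poly_iter Q q - [:0, 1:])
                 \<and> (\<forall>n\<ge>1. order a (poly_iter Q (q * p ^ n) - [:0, 1:])
                            = p ^ n * order a (poly_iter Q q - [:0, 1:]))"
      using RX ord by (simp add: R_def)
  qed
  show ?thesis unfolding Let_def Q_def[symmetric] F_def[symmetric] using P1 P2 P3 P4 by blast
qed


end
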